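(* Let $\Gamma$ be a Neumaier graph with parameters $(n,k,\lambda;a,c)$. If $c=k$, then $\Gamma$ is the cycle graph $C_4$.
   Context: All graphs are finite, simple, undirected and connected. A graph is edge-regular with parameters $(n,k,\lambda)$ if it has $n$ vertices, is $k$-regular, and any two adjacent vertices have exactly $\lambda$ common neighbours. A clique $C$ is a regular clique with nexus $a$ if every vertex not in $C$ has exactly $a$ neighbours in $C$. A Neumaier graph is a non-complete edge-regular graph containing a regular clique; it has parameters $(n,k,\lambda;a,c)$ if it is edge-regular with parameters $(n,k,\lambda)$ and contains a regular clique of size $c$ with nexus $a$. *)

theory Defs
  imports Main
begin

definition simple_graph :: "'a set \<Rightarrow> ('a \<Rightarrow> 'a \<Rightarrow> bool) \<Rightarrow> bool" where
  "simple_graph V E \<longleftrightarrow> finite V \<and> V \<noteq> {} \<and>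
     (\<forall>x y. E x y \<longrightarrow> x \<in> V \<and> y \<in> V) \<and>
     (\<forall>x y. E x y \<longrightarrow> E y x) \<and> (\<forall>x. \<not> E x x)"

definition connected_graph :: "'a set \<Rightarrow> ('a \<Rightarrow> 'a \<Rightarrow> bool) \<Rightarrow> bool" where
  "connected_graph V E \<longleftrightarrow> simple_graph V E \<and> (\<forall>x\<in>V. \<forall>y\<in>V. E\<^sup>*\<^sup>* x y)"

definition complete_graph :: "'a set \<Rightarrow> ('a \<Rightarrow> 'a \<Rightarrow> bool) \<Rightarrow> bool" where
  "complete_graph V E \<longleftrightarrow> (\<forall>x\<in>V. \<forall>y\<in>V. x \<noteq> y \<longrightarrow> E x y)"

definition edge_regular :: "'a set \<Rightarrow> ('a \<Rightarrow> 'a \<Rightarrow> bool) \<Rightarrow> nat \<Rightarrow> nat \<Rightarrow> nat \<Rightarrow> bool" where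
  "edge_regular V E n k lam \<longleftrightarrow> connected_graph V E \<and> card V = n \<and>
     (\<forall>v\<in>V. card {u\<in>V. E v u} = k) \<and>
     (\<forall>x y. E x y \<longrightarrow> card {w\<in>V. E x w \<and> E y w} = lam)"

definition is_clique :: "'a set \<Rightarrow> ('a \<Rightarrow> 'a \<Rightarrow> bool) \<Rightarrow> 'a set \<Rightarrow> bool" where
  "is_clique V E C \<longleftrightarrow> C \<noteq> {} \<and> C \<subseteq> V \<and> (\<forall>x\<in>C. \<forall>y\<in>C. x \<noteq> y \<longrightarrow> E x y)"

definition regular_clique :: "'a set \<Rightarrow> ('a \<Rightarrow> 'a \<Rightarrow> bool) \<Rightarrow> 'a set \<Rightarrow> nat \<Rightarrow> bool" where
  "regular_clique V E C a \<longleftrightarrow> is_clique V E C \<and> (\<forall>v\<in>V - C. card {u\<in>C. E v u} = a)"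

definition neumaier_graph :: "'a set \<Rightarrow> ('a \<Rightarrow> 'a \<Rightarrow> bool) \<Rightarrow> nat \<Rightarrow> nat \<Rightarrow> nat \<Rightarrow> nat \<Rightarrow> nat \<Rightarrow> bool" where
  "neumaier_graph V E n k lam a c \<longleftrightarrow> edge_regular V E n k lam \<and> \<not> complete_graph V E \<and>
     (\<exists>C. regular_clique V E C a \<and> card C = c)"

definition cycle_adj :: "nat \<Rightarrow> nat \<Rightarrow> nat \<Rightarrow> bool" where
  "cycle_adj m i j \<longleftrightarrow> i < m \<and> j < m \<and> (j = (i + 1) mod m \<or> i = (j + 1) mod m)"

definition iso_cycle :: "'a set \<Rightarrow> ('a \<Rightarrow> 'a \<Rightarrow> bool) \<Rightarrow> nat \<Rightarrow> bool" where
  "iso_cycle V E m \<longleftrightarrow> (\<exists>f. bij_betw f V {..<m} \<and> (\<forall>x\<in>V. \<forall>y\<in>V. E x y \<longleftrightarrow> cycle_adj m (f x) (f y)))"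

end

theory Submission
  imports Defs
begin

lemma cross_edge:
  assumes "E\<^sup>*\<^sup>* x y" "x \<in> C" "y \<notin> C"
  shows "\<exists>u v. E u v \<and> u \<in> C \<and> v \<notin> C"
  using assms
proof (induction rule: rtranclp_induct)
  case base then show ?case by simp
next
  case (step y z)
  then show ?case by (cases "y \<in> C") auto
qed

theorem proposition3p10:
  fixes V :: "'a set" and E :: "'a \<Rightarrow> 'a \<Rightarrow> bool" and n k lam a c :: nat
  assumes "neumaier_graph V E n k lam a c"
    and "c = k"
  shows "iso_cycle V E 4"
proof -
  from assms(1) obtain C where rc: "regular_clique V E C a" and cC: "card C = k"
    and nc: "\<not> complete_graph V E" and er: "edge_regular V E n k lam"
    using assms(2) unfolding neumaier_graph_def by auto
  have fin: "finite V" and inV: "\<And>x y. E x y \<Longrightarrow> x \<in> V \<and> y \<in> V"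
    and sym: "\<And>x y. E x y \<Longrightarrow> E y x" and irr: "\<And>x. \<not> E x x"
    and conn: "\<And>x y. x \<in> V \<Longrightarrow> y \<in> V \<Longrightarrow> E\<^sup>*\<^sup>* x y"
    using er unfolding edge_regular_def connected_graph_def simple_graph_def by auto
  have deg: "\<And>v. v \<in> V \<Longrightarrow> card {u\<in>V. E v u} = k"
    and lamd: "\<And>x y. E x y \<Longrightarrow> card {w\<in>V. E x w \<and> E y w} = lam"
    using er unfolding edge_regular_def by auto
  have Cne: "C \<noteq> {}" and CV: "C \<subseteq> V" and Ccl: "\<And>x y. x \<in> C \<Longrightarrow> y \<in> C \<Longrightarrow> x \<noteq> y \<Longrightarrow> E x y"
    and nex: "\<And>v. v \<in> V - C \<Longrightarrow> card {u\<in>C. E v u} = a"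
    using rc unfolding regular_clique_def is_clique_def by auto
  have finC: "finite C" using fin CV finite_subset by blast
  have "V - C \<noteq> {}"
  proof
    assume "V - C = {}"
    then have "V = C" using CV by auto
    then show False using nc Ccl unfolding complete_graph_def by auto
  qed
  then obtain v0 where v0: "v0 \<in> V" "v0 \<notin> C" by auto
  obtain x0 where x0: "x0 \<in> C" using Cne by auto
  obtain x v where xv: "E x v" "x \<in> C" "v \<notin> C"
    using cross_edge[OF conn[OF _ v0(1)] x0 v0(2)] x0 CV by blast
  have vV: "v \<in> V" using inV xv by auto
  have xV: "x \<in> V" using CV xv by auto
  have Nform: "{u\<in>V. E p u} = (C - {p}) \<union> {q}" if "E p q" "p \<in> C" "q \<notin> C" for p q
  proof -
    have sub: "(C - {p}) \<union> {q} \<subseteq> {u\<in>V. E p u}"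
      using that Ccl CV inV by auto
    have "card ((C - {p}) \<union> {q}) = k"
      using that finC cC card_Suc_Diff1[OF finC \<open>p \<in> C\<close>] by simp
    moreover have "card {u\<in>V. E p u} = k" using deg that CV by auto
    moreover have "finite {u\<in>V. E p u}" using fin by auto
    ultimately show ?thesis using card_subset_eq[OF _ sub] by simp
  qed
  have Nx: "{u\<in>V. E x u} = (C - {x}) \<union> {v}" using Nform xv by blast
  define A where "A = {u\<in>C. E v u}"
  have cA: "card A = a" using nex vV xv unfolding A_def by auto
  have comxv: "{w\<in>V. E x w \<and> E v w} = A - {x}"
  proof
    show "{w\<in>V. E x w \<and> E v w} \<subseteq> A - {x}"
    proof
      fix z assume z: "z \<in> {w\<in>V. E x w \<and> E v w}"
      then have "z \<in> (C - {x}) \<union> {v}" using Nx by blast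
      moreover have "z \<noteq> v" using z irr by auto
      ultimately show "z \<in> A - {x}" using z unfolding A_def by auto
    qed
    show "A - {x} \<subseteq> {w\<in>V. E x w \<and> E v w}"
      using Ccl CV xv unfolding A_def by auto
  qed
  have lam1: "lam = card (A - {x})" using lamd[OF xv(1)] comxv by simp
  obtain y where y: "y \<in> C" "\<not> E v y"
  proof (rule ccontr)
    assume "\<not> thesis"
    with that have allv: "\<And>u. u \<in> C \<Longrightarrow> E v u" by blast
    have "V \<subseteq> C \<union> {v}"
    proof
      fix z assume z: "z \<in> V"
      show "z \<in> C \<union> {v}"
      proof (rule ccontr)
        assume zn: "z \<notin> C \<union> {v}"
        have "card {u\<in>C. E z u} = a" using nex z zn by auto
        moreover have "A = C" using allv unfolding A_def by auto
        then have "a = card C" using cA by simp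
        ultimately have "card {u\<in>C. E z u} = card C" by simp
        then have "{u\<in>C. E z u} = C" using card_subset_eq[OF finC, of "{u\<in>C. E z u}"] by auto
        then have "E z x" using xv by auto
        then have "z \<in> {u\<in>V. E x u}" using sym z by auto
        then show False using Nx zn by auto
      qed
    qed
    then have "complete_graph V E"
      unfolding complete_graph_def using Ccl allv sym by blast
    then show False using nc by simp
  qed
  have yx: "y \<noteq> x" using y xv sym by auto
  have Exy: "E x y" using Ccl y xv yx by auto
  have yV: "y \<in> V" using CV y by auto
  have comxy: "{w\<in>V. E x w \<and> E y w} = C - {x, y}"
  proof
    show "{w\<in>V. E x w \<and> E y w} \<subseteq> C - {x, y}"
    proof
      fix z assume z: "z \<in> {w\<in>V. E x w \<and> E y w}"
      then have "z \<in> (C - {x}) \<union> {v}" using Nx by blast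
      moreover have "z \<noteq> v" using z y(2) sym by auto
      moreover have "z \<noteq> y" using z irr by auto
      ultimately show "z \<in> C - {x, y}" by auto
    qed
    show "C - {x, y} \<subseteq> {w\<in>V. E x w \<and> E y w}"
      using y Ccl CV xv by auto
  qed
  have k2: "card (C - {x,y}) = k - 2" using cC finC y xv yx by (simp add: card_Diff_subset)
  have lam2: "lam = k - 2" using lamd[OF Exy] comxy k2 by simp
  have kge2: "k \<ge> 2"
  proof -
    have "{x,y} \<subseteq> C" using y xv by auto
    then have "card {x,y} \<le> k" using cC finC card_mono by blast
    then show ?thesis using yx by simp
  qed
  have Aeq: "A = {x}"
  proof -
    have "z \<notin> A" if z: "z \<in> C" "z \<noteq> x" for z
    proof
      assume "z \<in> A"
      then have Evz: "E v z" unfolding A_def by auto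
      have zy: "z \<noteq> y" using Evz y by auto
      have Exz: "E x z" using Ccl z xv by auto
      have "(C - {x,z}) \<union> {v} \<subseteq> {w\<in>V. E x w \<and> E z w}"
        using Nx Ccl CV Evz sym xv z by auto
      then have "card ((C - {x,z}) \<union> {v}) \<le> lam"
        using lamd[OF Exz] fin card_mono[of "{w\<in>V. E x w \<and> E z w}"] by auto
      moreover have "card ((C - {x,z}) \<union> {v}) = k - 1"
        using cC finC z xv kge2 by (simp add: card_Diff_subset)
      ultimately show False using lam2 kge2 by simp
    qed
    moreover have "x \<in> A" unfolding A_def using xv sym by auto
    moreover have "A \<subseteq> C" unfolding A_def by auto
    ultimately show ?thesis by blast
  qed
  have lam0: "lam = 0" using lam1 Aeq by simp
  have k2': "k = 2" using lam0 lam2 kge2 by simp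
  have a1: "a = 1" using cA Aeq by simp
  have Cxy: "C = {x, y}"
  proof -
    have "{x,y} \<subseteq> C" using y xv by auto
    moreover have "card {x,y} = card C" using cC k2' yx by simp
    ultimately show ?thesis using card_subset_eq[OF finC] by metis
  qed
  obtain w where w: "E y w" "w \<notin> C"
  proof -
    have c2: "card {u\<in>V. E y u} = 2" using deg yV k2' by simp
    have "\<exists>w. E y w \<and> w \<notin> C"
    proof (rule ccontr)
      assume "\<not> (\<exists>w. E y w \<and> w \<notin> C)"
      then have "{u\<in>V. E y u} \<subseteq> {x}" using Cxy irr by auto
      then have "card {u\<in>V. E y u} \<le> 1" using card_mono[of "{x}"] by auto
      then show False using c2 by simp
    qed
    then show ?thesis using that by blast
  qed
  have Ny: "{u\<in>V. E y u} = (C - {y}) \<union> {w}" using Nform w y by blast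
  have wV: "w \<in> V" using inV w by auto
  have wv: "w \<noteq> v" using w y sym by auto
  have Vs: "V = {x, y, v, w}"
  proof
    show "{x, y, v, w} \<subseteq> V" using xV yV vV wV by auto
    show "V \<subseteq> {x, y, v, w}"
    proof
      fix z assume z: "z \<in> V"
      show "z \<in> {x, y, v, w}"
      proof (rule ccontr)
        assume zn: "z \<notin> {x, y, v, w}"
        then have "card {u\<in>C. E z u} = 1" using nex z a1 Cxy by auto
        then have "{u\<in>C. E z u} \<noteq> {}" by (metis card.empty zero_neq_one)
        then obtain u where "u \<in> C" "E z u" by auto
        then have "E x z \<or> E y z" using Cxy sym by auto
        then show False using Nx Ny z zn Cxy by auto
      qed
    qed
  qed
  have Exw: "\<not> E x w"
  proof
    assume "E x w"
    then have "w \<in> {u\<in>V. E x u}" using wV by blast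
    then have "w \<in> (C - {x}) \<union> {v}" using Nx by blast
    then show False using w(2) wv by blast
  qed
  have Eyv: "\<not> E y v" using y sym by auto
  have Evw: "E v w"
  proof (rule ccontr)
    assume nvw: "\<not> E v w"
    have "{u\<in>V. E v u} \<subseteq> {x}" using Vs nvw irr Eyv sym by auto
    then have "card {u\<in>V. E v u} \<le> 1" using card_mono[of "{x}"] by auto
    then show False using deg vV k2' by simp
  qed
  have dist: "x \<noteq> y" "x \<noteq> v" "x \<noteq> w" "y \<noteq> v" "y \<noteq> w" "v \<noteq> w"
    using yx xv w y Cxy wv by auto
  define f where "f = (\<lambda>p. if p = x then 0 else if p = y then 1 else if p = w then 2 else (3::nat))"
  have fx: "f x = 0" "f y = 1" "f w = 2" "f v = 3" using dist unfolding f_def by auto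
  have l4: "{..<4::nat} = {0,1,2,3}" by auto
  have "bij_betw f V {..<4}"
    unfolding bij_betw_def inj_on_def Vs l4 using fx dist by auto
  moreover have "\<forall>p\<in>V. \<forall>q\<in>V. E p q \<longleftrightarrow> cycle_adj 4 (f p) (f q)"
    unfolding Vs using fx dist Exy xv(1) w(1) Evw Exw Eyv irr sym
    by (auto simp: cycle_adj_def)
  ultimately show ?thesis unfolding iso_cycle_def by blast
qed

end
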